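(* Let $G$ be a bridgeless cubic graph and let $J_1,J_2,J_3$ be three joins of $G$ such that the weak core of $G$ with respect to $J_1,J_2,J_3$ is a weak $k$-core, i.e. $k=|E_0|+\frac{3}{2}\sum_{i=1}^3 n(J_i)$. Then $$\sum_{i=1}^3|\overline{J_i}|_{odd}\leq 2k.$$
   Context: A join of a graph $H$ is a set $J\subseteq E(H)$ such that every vertex has degree of the same parity in $H$ and in the spanning subgraph $(V(H),J)$. In a cubic graph every vertex has degree $1$ or $3$ in a join $J$; a vertex of degree $3$ in $J$ is a $J$-vertex and $n(J)$ is the number of $J$-vertices. Given three joins $J_1,J_2,J_3$, $E_i$ ($i=0,\dots,3$) is the set of edges lying in precisely $i$ of them; the weak core with respect to them is $G[E_0\cup E_2\cup E_3]$, and it is called a weak $l$-core (more precisely a $k'$-weak $l$-core, where $k'$ is the number of $J_i$ that are not 1-factors) with $l=|E_0|+\frac{3}{2}\sum_{i=1}^3 n(J_i)$. $\overline{J}$ denotes the complement of $J$, i.e. the spanning subgraph $(V(G),E(G)\setminus J)$, and $|H|_{odd}$ denotes the number of components of $H$ with an odd number of vertices. *)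

theory Defs
  imports Complex_Main
begin

text \<open>Finite multigraphs (parallel edges allowed): vertex set V, edge set E, and
  ends e = set of the two distinct end vertices of edge e.\<close>

definition multigraph :: "'v set \<Rightarrow> 'e set \<Rightarrow> ('e \<Rightarrow> 'v set) \<Rightarrow> bool" where
  "multigraph V E ends \<longleftrightarrow> finite V \<and> finite E \<and>
     (\<forall>e\<in>E. ends e \<subseteq> V \<and> card (ends e) = 2)"

definition deg :: "'e set \<Rightarrow> ('e \<Rightarrow> 'v set) \<Rightarrow> 'v \<Rightarrow> nat" where
  "deg F ends v = card {e\<in>F. v \<in> ends e}"

definition cubic :: "'v set \<Rightarrow> 'e set \<Rightarrow> ('e \<Rightarrow> 'v set) \<Rightarrow> bool" where
  "cubic V E ends \<longleftrightarrow> multigraph V E ends \<and> (\<forall>v\<in>V. deg E ends v = 3)"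

definition adj :: "'e set \<Rightarrow> ('e \<Rightarrow> 'v set) \<Rightarrow> 'v \<Rightarrow> 'v \<Rightarrow> bool" where
  "adj F ends u w \<longleftrightarrow> (\<exists>e\<in>F. ends e = {u, w})"

definition connected_in :: "'e set \<Rightarrow> ('e \<Rightarrow> 'v set) \<Rightarrow> 'v \<Rightarrow> 'v \<Rightarrow> bool" where
  "connected_in F ends u w \<longleftrightarrow> (adj F ends)\<^sup>*\<^sup>* u w"

definition is_bridge :: "'v set \<Rightarrow> 'e set \<Rightarrow> ('e \<Rightarrow> 'v set) \<Rightarrow> 'e \<Rightarrow> bool" where
  "is_bridge V E ends e \<longleftrightarrow> e \<in> E \<and>
     (\<exists>u w. ends e = {u, w} \<and> \<not> connected_in (E - {e}) ends u w)"

definition bridgeless :: "'v set \<Rightarrow> 'e set \<Rightarrow> ('e \<Rightarrow> 'v set) \<Rightarrow> bool" where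
  "bridgeless V E ends \<longleftrightarrow> (\<forall>e\<in>E. \<not> is_bridge V E ends e)"

definition components :: "'v set \<Rightarrow> 'e set \<Rightarrow> ('e \<Rightarrow> 'v set) \<Rightarrow> 'v set set" where
  "components V F ends = (\<lambda>v. {w\<in>V. connected_in F ends v w}) ` V"

definition odd_components :: "'v set \<Rightarrow> 'e set \<Rightarrow> ('e \<Rightarrow> 'v set) \<Rightarrow> nat" where
  "odd_components V F ends = card {C\<in>components V F ends. odd (card C)}"

definition is_join :: "'v set \<Rightarrow> 'e set \<Rightarrow> ('e \<Rightarrow> 'v set) \<Rightarrow> 'e set \<Rightarrow> bool" where
  "is_join V E ends J \<longleftrightarrow> J \<subseteq> E \<and>
     (\<forall>v\<in>V. even (deg J ends v) = even (deg E ends v))"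

definition n_join :: "'v set \<Rightarrow> ('e \<Rightarrow> 'v set) \<Rightarrow> 'e set \<Rightarrow> nat" where
  "n_join V ends J = card {v\<in>V. deg J ends v = 3}"

definition E_zero :: "'e set \<Rightarrow> 'e set \<Rightarrow> 'e set \<Rightarrow> 'e set \<Rightarrow> 'e set" where
  "E_zero E J1 J2 J3 = {e\<in>E. e \<notin> J1 \<and> e \<notin> J2 \<and> e \<notin> J3}"

end

theory Submission
  imports Defs
begin


definition Ix :: "nat set" where "Ix = {0,1,2}"

lemma double_count:
  fixes g :: "'e \<Rightarrow> int"
  assumes "finite K" "finite F"
  shows "(\<Sum>p\<in>K. \<Sum>e\<in>{e\<in>F. p \<in> ends e}. g e) = (\<Sum>e\<in>F. of_nat (card (ends e \<inter> K)) * g e)"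
proof -
  have "(\<Sum>p\<in>K. \<Sum>e\<in>{e\<in>F. p \<in> ends e}. g e) = (\<Sum>p\<in>K. \<Sum>e\<in>F. if p \<in> ends e then g e else 0)"
    using assms by (simp add: sum.inter_filter)
  also have "\<dots> = (\<Sum>e\<in>F. \<Sum>p\<in>K. if p \<in> ends e then g e else 0)"
    by (rule sum.swap)
  also have "\<dots> = (\<Sum>e\<in>F. of_nat (card (ends e \<inter> K)) * g e)"
  proof (rule sum.cong[OF refl])
    fix e assume "e \<in> F"
    have "(\<Sum>p\<in>K. if p \<in> ends e then g e else 0) = (\<Sum>p\<in>{p\<in>K. p \<in> ends e}. g e)"
      by (rule sum.inter_filter[symmetric, OF assms(1)])
    also have "\<dots> = of_nat (card {p\<in>K. p \<in> ends e}) * g e" by simp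
    also have "{p\<in>K. p \<in> ends e} = ends e \<inter> K" by auto
    finally show "(\<Sum>p\<in>K. if p \<in> ends e then g e else 0) = of_nat (card (ends e \<inter> K)) * g e" .
  qed
  finally show ?thesis .
qed

lemma double_count_nat:
  assumes "finite K" "finite F"
  shows "(\<Sum>p\<in>K. card {e\<in>F. p \<in> ends e}) = (\<Sum>e\<in>F. card (ends e \<inter> K))"
proof -
  have "int (\<Sum>p\<in>K. card {e\<in>F. p \<in> ends e}) = (\<Sum>p\<in>K. \<Sum>e\<in>{e\<in>F. p \<in> ends e}. (1::int))"
    by (simp add: of_nat_sum)
  also have "\<dots> = (\<Sum>e\<in>F. of_nat (card (ends e \<inter> K)) * 1)"
    by (rule double_count[OF assms])
  also have "\<dots> = int (\<Sum>e\<in>F. card (ends e \<inter> K))" by (simp add: of_nat_sum)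
  finally show ?thesis using of_nat_eq_iff by blast
qed

lemma card3: assumes "i \<noteq> j" "i \<noteq> k" "j \<noteq> k"
  shows "card {l\<in>{i,j,k}. P l} = of_bool (P i) + of_bool (P j) + of_bool (P k)"
proof -
  have "card {l\<in>{i,j,k}. P l} = (\<Sum>l\<in>{l\<in>{i,j,k}. P l}. 1)" by simp
  also have "\<dots> = (\<Sum>l\<in>{i,j,k}. if P l then 1 else 0)" by (rule sum.inter_filter) simp
  also have "\<dots> = of_bool (P i) + of_bool (P j) + of_bool (P k)" using assms by simp
  finally show ?thesis .
qed

lemma odd_le3: "odd (n::nat) \<Longrightarrow> n \<le> 3 \<Longrightarrow> n = 1 \<or> n = 3"
  by (cases n; cases "n - 1"; cases "n - 2"; auto)

locale tj =
  fixes V :: "'v set" and E :: "'e set" and ends :: "'e \<Rightarrow> 'v set" and J :: "nat \<Rightarrow> 'e set"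
  assumes cub: "cubic V E ends"
    and joins: "\<And>i. i \<in> Ix \<Longrightarrow> is_join V E ends (J i)"
begin

definition X where "X p = {e\<in>E. p \<in> ends e}"
definition jv where "jv i p \<longleftrightarrow> deg (J i) ends p = 3"
definition allnonJ where "allnonJ p \<longleftrightarrow> (\<forall>l\<in>Ix. \<not> jv l p)"
definition mult where "mult e = card {l\<in>Ix. e \<in> J l}"
definition pick where "pick i p = (THE e. e \<in> X p \<and> e \<in> J i)"
definition hh where "hh i j p = card {e\<in>E. p \<in> ends e \<and> e \<in> J i \<and> e \<in> J j}"
definition comp where "comp i v = {w\<in>V. connected_in (E - J i) ends v w}"

lemma finV: "finite V" and finE: "finite E"
  using cub by (auto simp: cubic_def multigraph_def)

lemma ends2: "e \<in> E \<Longrightarrow> card (ends e) = 2" and endsV: "e \<in> E \<Longrightarrow> ends e \<subseteq> V"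
  using cub by (auto simp: cubic_def multigraph_def)

lemma ends_other: assumes "e \<in> E" "p \<in> ends e" obtains q where "q \<noteq> p" "ends e = {p,q}"
proof -
  from ends2[OF assms(1)] obtain x y where xy: "ends e = {x,y}" "x \<noteq> y" by (auto simp: card_2_iff)
  show ?thesis
  proof (cases "p = x")
    case True then show ?thesis using xy that[of y] by auto
  next
    case False then have "p = y" using assms(2) xy by auto
    then show ?thesis using xy that[of x] by (auto simp: insert_commute)
  qed
qed

lemma finX: "finite (X p)" using finE by (simp add: X_def)

lemma cardX: "p \<in> V \<Longrightarrow> card (X p) = 3"
  using cub by (auto simp: cubic_def deg_def X_def)

lemma JE: "i \<in> Ix \<Longrightarrow> J i \<subseteq> E" using joins by (auto simp: is_join_def)

lemma degJ_eq: "i \<in> Ix \<Longrightarrow> {e\<in>J i. p \<in> ends e} = {e\<in>X p. e \<in> J i}"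
  using JE by (auto simp: X_def)

lemma degJ_odd: assumes "i \<in> Ix" "p \<in> V" shows "odd (deg (J i) ends p)"
  using joins[OF assms(1)] assms(2) cub by (auto simp: is_join_def cubic_def)

lemma degJ_le: assumes "i \<in> Ix" "p \<in> V" shows "deg (J i) ends p \<le> 3"
proof -
  have "deg (J i) ends p = card {e\<in>X p. e \<in> J i}" using degJ_eq[OF assms(1)] by (simp add: deg_def)
  also have "\<dots> \<le> card (X p)" by (rule card_mono[OF finX]) auto
  finally show ?thesis using cardX[OF assms(2)] by simp
qed

lemma degJ_cases: assumes "i \<in> Ix" "p \<in> V" shows "deg (J i) ends p = 1 \<or> deg (J i) ends p = 3"
proof -
  have "odd (deg (J i) ends p)" "deg (J i) ends p \<le> 3" using degJ_odd[OF assms] degJ_le[OF assms] by auto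
  then show ?thesis using odd_le3 by blast
qed

lemma jv_all: assumes "i \<in> Ix" "p \<in> V" "jv i p" shows "{e\<in>X p. e \<in> J i} = X p"
proof -
  have "card {e\<in>X p. e \<in> J i} = card (X p)"
    using assms degJ_eq[OF assms(1)] cardX[OF assms(2)] by (simp add: jv_def deg_def)
  then show ?thesis using finX by (metis (no_types, lifting) card_subset_eq mem_Collect_eq subsetI)
qed

lemma pick_single: assumes "i \<in> Ix" "p \<in> V" "\<not> jv i p" shows "{e\<in>X p. e \<in> J i} = {pick i p}"
proof -
  have "card {e\<in>X p. e \<in> J i} = 1"
    using assms degJ_cases[OF assms(1,2)] degJ_eq[OF assms(1)] by (simp add: jv_def deg_def)
  then obtain e where e: "{e\<in>X p. e \<in> J i} = {e}" by (auto simp: card_1_singleton_iff)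
  then have "pick i p = e" unfolding pick_def by (rule_tac the_equality) auto
  then show ?thesis using e by simp
qed

lemma pickX: "i \<in> Ix \<Longrightarrow> p \<in> V \<Longrightarrow> \<not> jv i p \<Longrightarrow> pick i p \<in> X p \<and> pick i p \<in> J i"
  using pick_single by blast

lemma pick_unique: "i \<in> Ix \<Longrightarrow> p \<in> V \<Longrightarrow> \<not> jv i p \<Longrightarrow> e \<in> X p \<Longrightarrow> e \<in> J i \<Longrightarrow> e = pick i p"
  using pick_single by blast

lemma jvD: "i \<in> Ix \<Longrightarrow> p \<in> V \<Longrightarrow> jv i p \<Longrightarrow> e \<in> X p \<Longrightarrow> e \<in> J i"
  using jv_all by blast

lemma E0_nonjv: "i \<in> Ix \<Longrightarrow> p \<in> V \<Longrightarrow> e \<in> X p \<Longrightarrow> e \<notin> J i \<Longrightarrow> \<not> jv i p"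
  using jvD by blast

lemma mult_le: "mult e \<le> 3"
proof -
  have "mult e \<le> card Ix" unfolding mult_def by (rule card_mono) (auto simp: Ix_def)
  then show ?thesis by (simp add: Ix_def)
qed

lemma mult_split: assumes "i \<in> Ix" "j \<in> Ix" "k \<in> Ix" "i \<noteq> j" "i \<noteq> k" "j \<noteq> k"
  shows "mult e = of_bool (e \<in> J i) + of_bool (e \<in> J j) + of_bool (e \<in> J k)"
proof -
  have I: "Ix = {i,j,k}" using assms by (auto simp: Ix_def)
  show ?thesis unfolding mult_def I by (rule card3[OF assms(4-6)])
qed

end


lemma adj_sym: "adj F ends u w \<Longrightarrow> adj F ends w u"
  by (auto simp: adj_def insert_commute)

lemma conn_sym: "connected_in F ends u w \<Longrightarrow> connected_in F ends w u"
proof -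
  have "symp (adj F ends)" by (auto intro: sympI adj_sym)
  then have "symp (adj F ends)\<^sup>*\<^sup>*" by (rule symp_rtranclp)
  then show "connected_in F ends u w \<Longrightarrow> connected_in F ends w u"
    unfolding connected_in_def by (auto dest: sympD)
qed

lemma conn_trans: "connected_in F ends u w \<Longrightarrow> connected_in F ends w x \<Longrightarrow> connected_in F ends u x"
  unfolding connected_in_def by (rule rtranclp_trans)

lemma conn_edge: "e \<in> F \<Longrightarrow> ends e = {u,w} \<Longrightarrow> connected_in F ends u w"
  unfolding connected_in_def adj_def by (rule r_into_rtranclp) blast

context tj begin

lemma comp_sub: "comp i v \<subseteq> V" by (auto simp: comp_def)
lemma comp_fin: "finite (comp i v)" using finV comp_sub finite_subset by blast
lemma comp_self: "v \<in> V \<Longrightarrow> v \<in> comp i v" by (auto simp: comp_def connected_in_def)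

lemma comp_eq: assumes "p \<in> comp i v" shows "comp i p = comp i v"
proof -
  have c: "connected_in (E - J i) ends v p" using assms by (auto simp: comp_def)
  show ?thesis unfolding comp_def using conn_trans[OF c] conn_trans[OF conn_sym[OF c]] by auto
qed

lemma comp_edge: assumes "p \<in> comp i v" "e \<in> E" "e \<notin> J i" "ends e = {p,q}" shows "q \<in> comp i v"
proof -
  have "q \<in> V" using endsV[OF assms(2)] assms(4) by auto
  moreover have "connected_in (E - J i) ends p q" using assms by (intro conn_edge) auto
  ultimately show ?thesis using assms(1) conn_trans by (auto simp: comp_def)
qed

lemma comp_edge2: assumes "p \<in> comp i v" "e \<in> E" "e \<notin> J i" "p \<in> ends e" shows "ends e \<subseteq> comp i v"
proof -
  obtain q where "ends e = {p,q}" using ends_other[OF assms(2,4)] by metis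
  then show ?thesis using comp_edge[OF assms(1-3)] assms(1) by auto
qed

lemma jv_comp: assumes "i \<in> Ix" "v \<in> V" "jv i v" shows "comp i v = {v}"
proof -
  have "w = v" if "connected_in (E - J i) ends v w" for w
  proof -
    have "(adj (E - J i) ends)\<^sup>*\<^sup>* v w" using that by (simp add: connected_in_def)
    then show ?thesis
    proof (cases rule: converse_rtranclpE)
      case (step y)
      then obtain e where "e \<in> E - J i" "ends e = {v,y}" by (auto simp: adj_def)
      then have "e \<in> X v" "e \<notin> J i" by (auto simp: X_def)
      then show ?thesis using jvD[OF assms] by blast
    qed simp
  qed
  then show ?thesis using comp_self[OF assms(2)] by (auto simp: comp_def)
qed

lemma components_eq: "components V (E - J i) ends = comp i ` V"
  by (simp add: components_def comp_def)

lemma parity: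
  assumes "i \<in> Ix" "j \<in> Ix" "i \<noteq> j" "odd (card (comp i v))"
  shows "odd (\<Sum>p\<in>comp i v. hh i j p)"
proof -
  let ?K = "comp i v"
  let ?A = "\<lambda>p. card {e\<in>J j - J i. p \<in> ends e}"
  have fJ: "finite (J j)" using JE[OF assms(2)] finE finite_subset by blast
  have split: "deg (J j) ends p = ?A p + hh i j p" for p
  proof -
    have "{e\<in>J j. p \<in> ends e} = {e\<in>J j - J i. p \<in> ends e} \<union> {e\<in>E. p \<in> ends e \<and> e \<in> J i \<and> e \<in> J j}"
      using JE[OF assms(2)] by auto
    moreover have "finite {e\<in>J j - J i. p \<in> ends e}" "finite {e\<in>E. p \<in> ends e \<and> e \<in> J i \<and> e \<in> J j}"
      using fJ finE by auto
    ultimately show ?thesis unfolding deg_def hh_def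
      by (subst card_Un_disjoint[symmetric]) auto
  qed
  have "odd (\<Sum>p\<in>?K. deg (J j) ends p)"
  proof -
    have "{p\<in>?K. odd (deg (J j) ends p)} = ?K" using degJ_odd[OF assms(2)] comp_sub by auto
    then show ?thesis using assms(4) comp_fin by (simp add: even_sum_iff)
  qed
  moreover have "even (\<Sum>p\<in>?K. ?A p)"
  proof -
    have "(\<Sum>p\<in>?K. ?A p) = (\<Sum>e\<in>J j - J i. card (ends e \<inter> ?K))"
      by (rule double_count_nat[OF comp_fin]) (use fJ in auto)
    moreover have "even (card (ends e \<inter> ?K))" if "e \<in> J j - J i" for e
    proof (cases "ends e \<inter> ?K = {}")
      case False
      then obtain p where "p \<in> ends e" "p \<in> ?K" by auto
      then have "ends e \<subseteq> ?K" using comp_edge2 that JE[OF assms(2)] by blast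
      then have "ends e \<inter> ?K = ends e" by auto
      then show ?thesis using ends2 that JE[OF assms(2)] by auto
    qed simp
    ultimately show ?thesis by (metis (no_types, lifting) dvd_sum)
  qed
  ultimately show ?thesis by (simp add: split sum.distrib)
qed

end


lemma card3_eq: assumes "finite A" "card A = 3" "a \<in> A" "b \<in> A" "c \<in> A" "a \<noteq> b" "a \<noteq> c" "b \<noteq> c"
  shows "A = {a,b,c}"
proof -
  have "{a,b,c} \<subseteq> A" using assms by auto
  moreover have "card {a,b,c} = 3" using assms by auto
  ultimately show ?thesis using assms(1,2) by (metis card_subset_eq)
qed

lemma others: assumes "c \<in> Ix" obtains j k where "j \<in> Ix" "k \<in> Ix" "c \<noteq> j" "c \<noteq> k" "j \<noteq> k"
proof -
  have "c = 0 \<or> c = 1 \<or> c = 2" using assms by (auto simp: Ix_def)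
  then show ?thesis
  proof (elim disjE)
    assume "c = 0" then show ?thesis using that[of 1 2] by (auto simp: Ix_def)
  next
    assume "c = 1" then show ?thesis using that[of 0 2] by (auto simp: Ix_def)
  next
    assume "c = 2" then show ?thesis using that[of 0 1] by (auto simp: Ix_def)
  qed
qed

lemma Ix_cases: "c \<in> Ix \<Longrightarrow> j \<in> Ix \<Longrightarrow> k \<in> Ix \<Longrightarrow> c \<noteq> j \<Longrightarrow> c \<noteq> k \<Longrightarrow> j \<noteq> k \<Longrightarrow> l \<in> Ix \<Longrightarrow> l = c \<or> l = j \<or> l = k"
  unfolding Ix_def by auto

context tj begin

definition bval :: "'v \<Rightarrow> nat \<Rightarrow> int" where
  "bval p m = (if m = 3 then (if allnonJ p then 8 else 12) else if m = 2 then 6 else 0)"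

definition deficient where
  "deficient c v \<longleftrightarrow> c \<in> Ix \<and> v \<in> V \<and> allnonJ v \<and> mult (pick c v) = 3 \<and> odd (card (comp c v)) \<and>
     (\<forall>q\<in>comp c v. q \<noteq> v \<longrightarrow> (\<forall>j\<in>Ix. j \<noteq> c \<longrightarrow> hh c j q = 0))"

definition Sp where
  "Sp p c \<longleftrightarrow> (\<exists>v y. y \<in> E \<and> mult y = 0 \<and> ends y = {p,v} \<and> deficient c v)"

definition tau :: "'v \<Rightarrow> nat \<Rightarrow> int" where
  "tau p i = (if jv i p then 12 else bval p (mult (pick i p)) + (if Sp p i then 2 else 0)
      - (if \<exists>c\<in>Ix. c \<noteq> i \<and> Sp p c then 1 else 0))"

lemma hh_pick: assumes "i \<in> Ix" "p \<in> V" "\<not> jv i p" shows "hh i j p = of_bool (pick i p \<in> J j)"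
proof -
  have "{e\<in>E. p \<in> ends e \<and> e \<in> J i \<and> e \<in> J j} = {e\<in>X p. e \<in> J i} \<inter> J j" by (auto simp: X_def)
  also have "\<dots> = {pick i p} \<inter> J j" using pick_single[OF assms] by simp
  finally have eq: "{e\<in>E. p \<in> ends e \<and> e \<in> J i \<and> e \<in> J j} = {pick i p} \<inter> J j" .
  show ?thesis unfolding hh_def eq by (cases "pick i p \<in> J j") auto
qed

lemma mult0: "mult y = 0 \<Longrightarrow> l \<in> Ix \<Longrightarrow> y \<notin> J l"
proof -
  assume a: "mult y = 0" "l \<in> Ix"
  have "finite {l\<in>Ix. y \<in> J l}" by (simp add: Ix_def)
  then have "{l\<in>Ix. y \<in> J l} = {}" using a(1) by (simp add: mult_def)
  then show ?thesis using a(2) by auto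
qed

lemma Sp_facts:
  assumes "Sp u c"
  obtains v y e where "c \<in> Ix" "u \<in> V" "allnonJ u" "y \<in> E" "mult y = 0" "ends y = {u,v}" "deficient c v"
    "u \<noteq> v" "u \<in> comp c v" "v \<in> V" "y \<in> X u"
    "mult (pick c u) = 1" "\<And>j. j \<in> Ix \<Longrightarrow> j \<noteq> c \<Longrightarrow> pick j u = e" "mult e = 2"
    "\<And>f. f \<in> X u \<Longrightarrow> mult f = 0 \<Longrightarrow> f = y"
proof -
  from assms obtain v y where y: "y \<in> E" "mult y = 0" "ends y = {u,v}" and d: "deficient c v"
    by (auto simp: Sp_def)
  have c: "c \<in> Ix" and v: "v \<in> V" "allnonJ v" using d by (auto simp: deficient_def)
  have uV: "u \<in> V" using endsV[OF y(1)] y(3) by auto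
  have uv: "u \<noteq> v" using ends2[OF y(1)] y(3) by auto
  have ucomp: "u \<in> comp c v"
    using comp_edge[OF comp_self[OF v(1)] y(1) mult0[OF y(2) c]] y(3) by (simp add: insert_commute)
  have hh0: "hh c j u = 0" if "j \<in> Ix" "j \<noteq> c" for j
    using d ucomp uv that by (auto simp: deficient_def)
  have yX: "y \<in> X u" using y by (auto simp: X_def)
  have nj: "\<not> jv l u" if "l \<in> Ix" for l using E0_nonjv[OF that uV yX mult0[OF y(2) that]] .
  then have anj: "allnonJ u" by (simp add: allnonJ_def)
  obtain j k where jk: "j \<in> Ix" "k \<in> Ix" "c \<noteq> j" "c \<noteq> k" "j \<noteq> k" using others[OF c] by metis
  let ?g = "pick c u"
  have g: "?g \<in> X u" "?g \<in> J c" using pickX[OF c uV nj[OF c]] by auto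
  have gn: "?g \<notin> J l" if "l \<in> Ix" "l \<noteq> c" for l
    using hh0[OF that] hh_pick[OF c uV nj[OF c], of l] by auto
  have pj: "pick l u \<in> X u" "pick l u \<in> J l" "pick l u \<noteq> y" "pick l u \<noteq> ?g" if "l \<in> Ix" "l \<noteq> c" for l
    using pickX[OF that(1) uV nj[OF that(1)]] mult0[OF y(2) that(1)] gn[OF that] by auto
  have gy: "?g \<noteq> y" using g mult0[OF y(2) c] by auto
  have Xu: "X u = {y, ?g, pick j u}"
    by (rule card3_eq[OF finX cardX[OF uV] yX g(1) pj(1)[OF jk(1) jk(3)[symmetric]]])
       (use gy pj[OF jk(1) jk(3)[symmetric]] in auto)
  define e where "e = pick j u"
  have pe: "pick l u = e" if "l \<in> Ix" "l \<noteq> c" for l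
    using pj[OF that] Xu by (auto simp: e_def)
  have eJ: "e \<in> J j" "e \<in> J k" using pj(2)[OF jk(1)] pj(2)[OF jk(2)] pe[OF jk(1)] pe[OF jk(2)] jk by auto
  have ec: "e \<notin> J c"
  proof
    assume "e \<in> J c"
    then have "e = ?g" using pick_unique[OF c uV nj[OF c]] pj(1)[OF jk(1)] e_def jk by auto
    then show False using pj(4)[OF jk(1)] jk e_def by auto
  qed
  have me: "mult e = 2" using mult_split[OF c jk, of e] eJ ec by simp
  have mg: "mult ?g = 1" using mult_split[OF c jk, of ?g] g gn[OF jk(1)] gn[OF jk(2)] jk by auto
  have f0: "f = y" if "f \<in> X u" "mult f = 0" for f
  proof -
    have "f \<noteq> ?g" using g mult0[OF that(2) c] by auto
    moreover have "f \<noteq> e" using eJ mult0[OF that(2) jk(1)] by auto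
    ultimately show ?thesis using that(1) Xu e_def by auto
  qed
  show ?thesis
    by (rule that[OF c uV anj y d uv ucomp v(1) yX mg pe me f0])
qed

lemma Sp_unique: assumes "Sp u c" "Sp u c'" shows "c = c'"
proof (rule ccontr)
  assume "c \<noteq> c'"
  obtain v y e where "c' \<in> Ix" "\<And>j. j \<in> Ix \<Longrightarrow> j \<noteq> c \<Longrightarrow> pick j u = e" "mult e = 2"
    using Sp_facts[OF assms(1)] Sp_facts[OF assms(2)] by metis
  moreover have "mult (pick c' u) = 1" using Sp_facts[OF assms(2)] by metis
  ultimately show False using \<open>c \<noteq> c'\<close> by force
qed

end

context tj begin

lemma mult3_all: assumes "mult x = 3" "l \<in> Ix" shows "x \<in> J l"
proof -
  have "{l\<in>Ix. x \<in> J l} \<subseteq> Ix" by auto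
  moreover have "card {l\<in>Ix. x \<in> J l} = card Ix" using assms(1) by (simp add: mult_def Ix_def)
  ultimately have "{l\<in>Ix. x \<in> J l} = Ix" by (metis card_subset_eq finite.emptyI finite_insert Ix_def)
  then show ?thesis using assms(2) by auto
qed

lemma AAA_pick: assumes "v \<in> V" "allnonJ v" "i \<in> Ix" "mult (pick i v) = 3" "l \<in> Ix"
  shows "pick l v = pick i v"
proof -
  have nj: "\<not> jv l v" "\<not> jv i v" using assms by (auto simp: allnonJ_def)
  have "pick i v \<in> J l" using mult3_all[OF assms(4,5)] .
  moreover have "pick i v \<in> X v" using pickX[OF assms(3,1) nj(2)] by auto
  ultimately show ?thesis using pick_unique[OF assms(5,1) nj(1)] by auto
qed

lemma tau_AAA: assumes "v \<in> V" "allnonJ v" "c \<in> Ix" "mult (pick c v) = 3" "i \<in> Ix"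
  shows "tau v i = 8"
proof -
  have nj: "\<not> jv i v" using assms by (auto simp: allnonJ_def)
  have m: "mult (pick i v) = 3" using AAA_pick[OF assms(1-4) assms(5)] assms(4) by simp
  have nS: "\<not> Sp v l" for l
  proof
    assume s: "Sp v l"
    then have "l \<in> Ix" "mult (pick l v) = 1" using Sp_facts by metis+
    then show False using AAA_pick[OF assms(1-4)] assms(4) by force
  qed
  show ?thesis using nj m nS assms(2) by (simp add: tau_def bval_def)
qed

lemma tau_Sp_c: assumes "Sp u c" shows "tau u c = 2"
proof -
  have c: "c \<in> Ix" and anj: "allnonJ u" and m: "mult (pick c u) = 1" using Sp_facts[OF assms] by metis+
  have nj: "\<not> jv c u" using anj c by (auto simp: allnonJ_def)
  have "\<not> (\<exists>c'\<in>Ix. c' \<noteq> c \<and> Sp u c')" using Sp_unique[OF assms] by blast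
  then show ?thesis using nj m assms by (simp add: tau_def bval_def)
qed

lemma tau_Sp_other: assumes "Sp u c" "i \<in> Ix" "i \<noteq> c" shows "tau u i = 5"
proof -
  obtain e where c: "c \<in> Ix" and anj: "allnonJ u" and pe: "pick i u = e" and me: "mult e = 2"
    using Sp_facts[OF assms(1)] assms(2,3) by metis
  have nj: "\<not> jv i u" using anj assms(2) by (auto simp: allnonJ_def)
  have nS: "\<not> Sp u i" using Sp_unique[OF assms(1)] assms(3) by blast
  have "\<exists>c'\<in>Ix. c' \<noteq> i \<and> Sp u c'" using c assms(1,3) by (intro bexI[of _ c]) auto
  then show ?thesis using nj pe me nS by (simp add: tau_def bval_def)
qed

lemma tau_nonneg: assumes "i \<in> Ix" "p \<in> V" shows "0 \<le> tau p i"
proof (cases "jv i p")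
  case True then show ?thesis by (simp add: tau_def)
next
  case False
  show ?thesis
  proof (cases "\<exists>c\<in>Ix. c \<noteq> i \<and> Sp p c")
    case True
    then obtain c where "Sp p c" "c \<noteq> i" by blast
    then show ?thesis using tau_Sp_other assms(1) by force
  next
    case F: False
    have "0 \<le> bval p m" for m by (simp add: bval_def)
    moreover have "tau p i = bval p (mult (pick i p)) + (if Sp p i then 2 else 0) - 0"
      unfolding tau_def if_not_P[OF False] if_not_P[OF F] by (rule refl)
    ultimately show ?thesis by simp
  qed
qed

lemma tau_lower:
  assumes ijk: "i \<in> Ix" "j \<in> Ix" "k \<in> Ix" "i \<noteq> j" "i \<noteq> k" "j \<noteq> k"
    and p: "p \<in> V" "\<not> jv i p" "\<not> (\<exists>c\<in>Ix. c \<noteq> i \<and> Sp p c)"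
  shows "6 * (int (hh i j p) + int (hh i k p)) - 4 * (int (hh i j p) * int (hh i k p)) \<le> tau p i"
    and "hh i j p = 1 \<Longrightarrow> hh i k p = 1 \<Longrightarrow> \<not> allnonJ p \<Longrightarrow> 12 \<le> tau p i"
proof -
  let ?g = "pick i p"
  have gi: "?g \<in> J i" using pickX[OF ijk(1) p(1,2)] by auto
  have m: "mult ?g = 1 + of_bool (?g \<in> J j) + of_bool (?g \<in> J k)"
    using mult_split[OF ijk, of ?g] gi by simp
  have hj: "hh i j p = of_bool (?g \<in> J j)" and hk: "hh i k p = of_bool (?g \<in> J k)"
    using hh_pick[OF ijk(1) p(1,2)] by auto
  have "tau p i = bval p (mult ?g) + (if Sp p i then 2 else 0) - 0"
    unfolding tau_def if_not_P[OF p(2)] if_not_P[OF p(3)] by (rule refl)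
  then have t: "tau p i \<ge> bval p (mult ?g)" by simp
  show "6 * (int (hh i j p) + int (hh i k p)) - 4 * (int (hh i j p) * int (hh i k p)) \<le> tau p i"
    using t m hj hk by (cases "?g \<in> J j"; cases "?g \<in> J k"; cases "allnonJ p"; simp add: bval_def)
  show "hh i j p = 1 \<Longrightarrow> hh i k p = 1 \<Longrightarrow> \<not> allnonJ p \<Longrightarrow> 12 \<le> tau p i"
    using t m hj hk by (cases "?g \<in> J j"; cases "?g \<in> J k"; simp add: bval_def)
qed

lemma deficient_struct:
  assumes "deficient c v"
  obtains y z u w where "y \<in> E" "z \<in> E" "mult y = 0" "mult z = 0" "ends y = {u,v}" "ends z = {w,v}"
    "Sp u c" "Sp w c" "u \<noteq> w" "u \<noteq> v" "w \<noteq> v"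
proof -
  have c: "c \<in> Ix" and v: "v \<in> V" "allnonJ v" and m3: "mult (pick c v) = 3"
    using assms by (auto simp: deficient_def)
  let ?x = "pick c v"
  have njc: "\<not> jv c v" using v c by (auto simp: allnonJ_def)
  have xX: "?x \<in> X v" using pickX[OF c v(1) njc] by auto
  have "card (X v - {?x}) = 2" using cardX[OF v(1)] xX finX by (simp add: card_Diff_singleton)
  then obtain y z where yz: "X v - {?x} = {y,z}" "y \<noteq> z" by (auto simp: card_2_iff)
  have E0: "mult f = 0" if "f \<in> X v" "f \<noteq> ?x" for f
  proof -
    have "f \<notin> J l" if "l \<in> Ix" for l
    proof
      assume "f \<in> J l"
      then have "f = pick l v" using pick_unique[OF that v(1)] \<open>f \<in> X v\<close> v(2) \<open>l \<in> Ix\<close>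
        by (auto simp: allnonJ_def)
      then show False using AAA_pick[OF v c m3 that] \<open>f \<noteq> ?x\<close> by simp
    qed
    then have "{l\<in>Ix. f \<in> J l} = {}" by auto
    then show ?thesis unfolding mult_def by (metis card.empty)
  qed
  have y: "y \<in> X v" "y \<noteq> ?x" and z: "z \<in> X v" "z \<noteq> ?x" using yz by auto
  have yE: "y \<in> E" "v \<in> ends y" and zE: "z \<in> E" "v \<in> ends z" using y z by (auto simp: X_def)
  obtain u where u: "u \<noteq> v" "ends y = {v,u}" using ends_other[OF yE] by metis
  obtain w where w: "w \<noteq> v" "ends z = {v,w}" using ends_other[OF zE] by metis
  have eu: "ends y = {u,v}" and ew: "ends z = {w,v}" using u w by (auto simp: insert_commute)
  have Su: "Sp u c" unfolding Sp_def using yE(1) E0[OF y] eu assms by blast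
  have Sw: "Sp w c" unfolding Sp_def using zE(1) E0[OF z] ew assms by blast
  have "u \<noteq> w"
  proof
    assume "u = w"
    obtain y0 where f0: "\<And>f. f \<in> X u \<Longrightarrow> mult f = 0 \<Longrightarrow> f = y0" using Sp_facts[OF Su] by metis
    have "y \<in> X u" "z \<in> X u" using yE zE eu ew \<open>u = w\<close> by (auto simp: X_def)
    then have "y = y0" "z = y0" using f0 E0[OF y] E0[OF z] by auto
    then show False using yz(2) by simp
  qed
  then show ?thesis using that[OF yE(1) zE(1) E0[OF y] E0[OF z] eu ew Su Sw _ u(1) w(1)] by blast
qed

end

context tj begin

lemma main_K:
  assumes i: "i \<in> Ix" and v0: "v0 \<in> V" and odd: "odd (card (comp i v0))"
  shows "12 \<le> (\<Sum>p\<in>comp i v0. tau p i)"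
proof -
  let ?K = "comp i v0"
  let ?f = "\<lambda>p. tau p i"
  have nn: "\<forall>p\<in>?K. 0 \<le> ?f p" using tau_nonneg[OF i] comp_sub by auto
  have sub: "sum ?f A \<le> sum ?f ?K" if "A \<subseteq> ?K" for A
    by (rule sum_mono2[OF comp_fin that]) (use nn in auto)
  show ?thesis
  proof (cases "\<exists>p\<in>?K. jv i p")
    case True
    then obtain p where p: "p \<in> ?K" "jv i p" by blast
    have pV: "p \<in> V" using p comp_sub by auto
    have "?K = {p}" using comp_eq[OF p(1)] jv_comp[OF i pV p(2)] by simp
    then show ?thesis using p(2) by (simp add: tau_def)
  next
    case nJ: False
    show ?thesis
    proof (cases "\<exists>u\<in>?K. \<exists>c\<in>Ix. c \<noteq> i \<and> Sp u c")
      case True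
      then obtain u c where u: "u \<in> ?K" "c \<in> Ix" "c \<noteq> i" "Sp u c" by blast
      obtain v y where y: "y \<in> E" "mult y = 0" "ends y = {u,v}" and d: "deficient c v" and uv: "u \<noteq> v"
        using Sp_facts[OF u(4)] by metis
      have vK: "v \<in> ?K" using comp_edge[OF u(1) y(1) mult0[OF y(2) i] y(3)] .
      obtain y1 z1 u1 w1 where s: "y1 \<in> E" "z1 \<in> E" "mult y1 = 0" "mult z1 = 0" "ends y1 = {u1,v}"
        "ends z1 = {w1,v}" "Sp u1 c" "Sp w1 c" "u1 \<noteq> w1" "u1 \<noteq> v" "w1 \<noteq> v"
        using deficient_struct[OF d] by metis
      have u1K: "u1 \<in> ?K" using comp_edge[OF vK s(1) mult0[OF s(3) i]] s(5) by (simp add: insert_commute)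
      have w1K: "w1 \<in> ?K" using comp_edge[OF vK s(2) mult0[OF s(4) i]] s(6) by (simp add: insert_commute)
      obtain u2 where u2: "u2 \<in> ?K" "Sp u2 c" "u2 \<noteq> u" "u2 \<noteq> v"
        using u1K w1K s by (cases "u1 = u") auto
      have tv: "tau v i = 8" using d tau_AAA[OF _ _ _ _ i] by (auto simp: deficient_def)
      have tu: "tau u i = 5" using tau_Sp_other[OF u(4) i] u(3) by simp
      have tu2: "tau u2 i = 5" using tau_Sp_other[OF u2(2) i] u(3) by simp
      have "sum ?f {u,v,u2} = 18" using tv tu tu2 uv u2 by simp
      moreover have "sum ?f {u,v,u2} \<le> sum ?f ?K" using sub u(1) vK u2(1) by auto
      ultimately show ?thesis by simp
    next
      case nS: False
      obtain j k where jk: "j \<in> Ix" "k \<in> Ix" "i \<noteq> j" "i \<noteq> k" "j \<noteq> k" using others[OF i] by metis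
      have pV: "p \<in> V" if "p \<in> ?K" for p using that comp_sub by auto
      have lb: "6 * (int (hh i j p) + int (hh i k p)) - 4 * (int (hh i j p) * int (hh i k p)) \<le> tau p i"
        if "p \<in> ?K" for p
        using tau_lower(1)[OF i jk pV[OF that]] nJ nS that by blast
      have lb12: "12 \<le> tau p i" if "p \<in> ?K" "hh i j p = 1" "hh i k p = 1" "\<not> allnonJ p" for p
        using tau_lower(2)[OF i jk pV[OF that(1)]] nJ nS that by blast
      have hj1: "hh i j p \<le> 1" and hk1: "hh i k p \<le> 1" if "p \<in> ?K" for p
        using hh_pick[OF i pV[OF that]] nJ that by auto
      let ?H = "{p\<in>?K. 1 \<le> hh i j p + hh i k p}"
      have heavy6: "6 \<le> tau p i" if "p \<in> ?H" for p
      proof -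
        have "hh i j p \<le> 1" "hh i k p \<le> 1" "1 \<le> hh i j p + hh i k p" using that hj1 hk1 by auto
        then have "6 \<le> 6 * (int (hh i j p) + int (hh i k p)) - 4 * (int (hh i j p) * int (hh i k p))"
          by (cases "hh i j p"; cases "hh i k p"; auto)
        then show ?thesis using lb that by force
      qed
      show ?thesis
      proof (cases "\<exists>p\<in>?H. \<exists>q\<in>?H. p \<noteq> q")
        case True
        then obtain p q where pq: "p \<in> ?H" "q \<in> ?H" "p \<noteq> q" by blast
        have "12 \<le> sum ?f {p,q}" using heavy6[OF pq(1)] heavy6[OF pq(2)] pq(3) by simp
        moreover have "sum ?f {p,q} \<le> sum ?f ?K" by (rule sub) (use pq in auto)
        ultimately show ?thesis by simp
      next
        case False
        have parj: "odd (\<Sum>p\<in>?K. hh i j p)" using parity[OF i jk(1,3) odd] .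
        have park: "odd (\<Sum>p\<in>?K. hh i k p)" using parity[OF i jk(2,4) odd] .
        have "?H \<noteq> {}"
        proof
          assume "?H = {}"
          then have "\<forall>p\<in>?K. hh i j p = 0" by auto
          then show False using parj by simp
        qed
        then obtain p where pH: "p \<in> ?H" by blast
        have Hp: "hh i j q = 0 \<and> hh i k q = 0" if q: "q \<in> ?K" "q \<noteq> p" for q
        proof -
          have "q \<notin> ?H" using False pH q by blast
          then have "\<not> 1 \<le> hh i j q + hh i k q" using q(1) by blast
          then show ?thesis by simp
        qed
        have pK: "p \<in> ?K" using pH by auto
        have sj: "(\<Sum>q\<in>?K. hh i j q) = hh i j p"
          using sum.mono_neutral_right[OF comp_fin, where S="{p}" and g="\<lambda>q. hh i j q"] pK Hp by auto
        have sk: "(\<Sum>q\<in>?K. hh i k q) = hh i k p"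
          using sum.mono_neutral_right[OF comp_fin, where S="{p}" and g="\<lambda>q. hh i k q"] pK Hp by auto
        have hj: "hh i j p = 1" using parj sj hj1[OF pK] by (cases "hh i j p") auto
        have hk: "hh i k p = 1" using park sk hk1[OF pK] by (cases "hh i k p") auto
        show ?thesis
        proof (cases "allnonJ p")
          case False
          have "tau p i \<le> sum ?f ?K" using sub[of "{p}"] pK by simp
          then show ?thesis using lb12[OF pK hj hk False] by simp
        next
          case anj: True
          have njp: "\<not> jv i p" using nJ pK by auto
          have m3: "mult (pick i p) = 3"
            using mult_split[OF i jk, of "pick i p"] pickX[OF i pV[OF pK] njp]
              hh_pick[OF i pV[OF pK] njp, of j] hh_pick[OF i pV[OF pK] njp, of k] hj hk by auto
          have Kp: "comp i p = ?K" using comp_eq[OF pK] .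
          have d: "deficient i p" unfolding deficient_def
          proof (intro conjI ballI impI)
            fix q j' assume q: "q \<in> comp i p" "q \<noteq> p" "j' \<in> Ix" "j' \<noteq> i"
            then have "j' = j \<or> j' = k" using Ix_cases[OF i jk] by blast
            then show "hh i j' q = 0" using Hp q Kp by auto
          qed (use i pV[OF pK] anj m3 Kp odd in auto)
          obtain y z u w where s: "y \<in> E" "z \<in> E" "mult y = 0" "mult z = 0" "ends y = {u,p}"
            "ends z = {w,p}" "Sp u i" "Sp w i" "u \<noteq> w" "u \<noteq> p" "w \<noteq> p"
            using deficient_struct[OF d] by metis
          have uK: "u \<in> ?K" using comp_edge[OF pK s(1) mult0[OF s(3) i]] s(5) by (simp add: insert_commute)
          have wK: "w \<in> ?K" using comp_edge[OF pK s(2) mult0[OF s(4) i]] s(6) by (simp add: insert_commute)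
          have tp: "tau p i = 8" using tau_AAA[OF pV[OF pK] anj i m3 i] .
          have "sum ?f {p,u,w} = 12" using tp tau_Sp_c[OF s(7)] tau_Sp_c[OF s(8)] s(9-11) by simp
          moreover have "sum ?f {p,u,w} \<le> sum ?f ?K" using sub pK uK wK by auto
          ultimately show ?thesis by simp
        qed
      qed
    qed
  qed
qed

end

context tj begin

lemma odd_bound: assumes i: "i \<in> Ix"
  shows "12 * int (odd_components V (E - J i) ends) \<le> (\<Sum>p\<in>V. tau p i)"
proof -
  let ?O = "{C \<in> comp i ` V. odd (card C)}"
  have fO: "finite ?O" using finV by auto
  have "12 * int (card ?O) = (\<Sum>C\<in>?O. 12)" by simp
  also have "\<dots> \<le> (\<Sum>C\<in>?O. \<Sum>p\<in>C. tau p i)"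
  proof (rule sum_mono)
    fix C assume "C \<in> ?O"
    then obtain v0 where "v0 \<in> V" "C = comp i v0" "odd (card (comp i v0))" by auto
    then show "12 \<le> (\<Sum>p\<in>C. tau p i)" using main_K[OF i] by simp
  qed
  also have "\<dots> = (\<Sum>p\<in>\<Union>?O. tau p i)"
  proof (rule sum.Union_disjoint[symmetric, simplified])
    show "\<forall>A\<in>?O. finite A" using comp_fin by auto
    show "\<forall>A\<in>?O. \<forall>B\<in>?O. A \<noteq> B \<longrightarrow> A \<inter> B = {}"
    proof (intro ballI impI)
      fix A B assume "A \<in> ?O" "B \<in> ?O" "A \<noteq> B"
      then obtain a b where ab: "A = comp i a" "B = comp i b" by auto
      show "A \<inter> B = {}"
      proof (rule ccontr)
        assume "A \<inter> B \<noteq> {}"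
        then obtain p where "p \<in> comp i a" "p \<in> comp i b" using ab by auto
        then have "comp i a = comp i b" using comp_eq by metis
        then show False using ab \<open>A \<noteq> B\<close> by simp
      qed
    qed
  qed
  also have "\<dots> \<le> (\<Sum>p\<in>V. tau p i)"
    by (rule sum_mono2[OF finV]) (use comp_sub tau_nonneg[OF i] in auto)
  finally show ?thesis by (simp add: odd_components_def components_eq)
qed

definition ww :: "nat \<Rightarrow> int" where "ww m = (if m = 2 then 12 else if m = 3 then 24 else 0)"

lemma adj_sum: assumes "p \<in> V"
  shows "(\<Sum>i\<in>Ix. (if Sp p i then 2 else 0) - (if \<exists>c\<in>Ix. c \<noteq> i \<and> Sp p c then 1 else (0::int))) \<le> 0"
proof (cases "\<exists>c. Sp p c")
  case True
  then obtain c where s: "Sp p c" by blast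
  have c: "c \<in> Ix" using Sp_facts[OF s] by metis
  obtain j k where jk: "j \<in> Ix" "k \<in> Ix" "c \<noteq> j" "c \<noteq> k" "j \<noteq> k" using others[OF c] by metis
  have I: "Ix = {c,j,k}" using c jk by (auto simp: Ix_def)
  have u: "Sp p l \<longleftrightarrow> l = c" for l using Sp_unique[OF s] s by blast
  let ?t = "\<lambda>i. (if Sp p i then 2 else 0) - (if \<exists>c\<in>Ix. c \<noteq> i \<and> Sp p c then 1 else (0::int))"
  have tc: "?t c = 2" using u by auto
  have tl: "?t l = -1" if "l \<in> Ix" "l \<noteq> c" for l
  proof -
    have "\<not> Sp p l" using u that by blast
    moreover have "\<exists>c'\<in>Ix. c' \<noteq> l \<and> Sp p c'" using c s that by (intro bexI[of _ c]) auto
    ultimately show ?thesis by simp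
  qed
  define t where "t = ?t"
  have "sum t Ix = sum t {c,j,k}" using I by simp
  also have "\<dots> = t c + t j + t k" using jk by simp
  finally have "sum t Ix = t c + t j + t k" .
  then have "sum t Ix = 0" using tc tl[OF jk(1) jk(3)[symmetric]] tl[OF jk(2) jk(4)[symmetric]]
    unfolding t_def by simp
  then show ?thesis unfolding t_def by simp
next
  case False
  then have "\<And>i. \<not> Sp p i" by blast
  then show ?thesis by simp
qed

lemma budget: assumes pV: "p \<in> V"
  shows "(\<Sum>i\<in>Ix. tau p i) \<le> (\<Sum>e\<in>X p. ww (mult e)) + 12 * int (card {i\<in>Ix. jv i p})"
proof -
  let ?N = "{i\<in>Ix. \<not> jv i p}"
  let ?s = "card {i\<in>Ix. jv i p}"
  have fI: "finite Ix" by (simp add: Ix_def)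
  have anj_s: "allnonJ p \<longleftrightarrow> ?s = 0" using fI by (auto simp: allnonJ_def)
  define base where "base i = (if jv i p then 12 else bval p (mult (pick i p)))" for i
  define ad where "ad i = (if Sp p i then 2 else 0) - (if \<exists>c\<in>Ix. c \<noteq> i \<and> Sp p c then 1 else (0::int))" for i
  have tsplit: "tau p i \<le> base i + ad i" if iI: "i \<in> Ix" for i
  proof (cases "jv i p")
    case True
    have nS: "\<not> Sp p l" for l
    proof
      assume "Sp p l"
      then have "allnonJ p" using Sp_facts by metis
      then show False using True iI by (simp add: allnonJ_def)
    qed
    have "ad i = 0" unfolding ad_def using nS by simp
    moreover have "tau p i = base i" unfolding tau_def base_def if_P[OF True] by (rule refl)
    ultimately show ?thesis by simp
  next
    case False
    have "tau p i = base i + ad i" unfolding tau_def base_def ad_def if_not_P[OF False] by (rule add_diff_eq[symmetric])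
    then show ?thesis by simp
  qed
  have "(\<Sum>i\<in>Ix. tau p i) \<le> (\<Sum>i\<in>Ix. base i + ad i)" by (rule sum_mono) (erule tsplit)
  also have "\<dots> = (\<Sum>i\<in>Ix. base i) + (\<Sum>i\<in>Ix. ad i)" by (simp add: sum.distrib)
  also have "\<dots> \<le> (\<Sum>i\<in>Ix. base i)" using adj_sum[OF pV] by (simp add: ad_def)
  also have "(\<Sum>i\<in>Ix. base i) = (\<Sum>i\<in>{i\<in>Ix. jv i p}. base i) + (\<Sum>i\<in>?N. base i)"
  proof -
    have "Ix = {i\<in>Ix. jv i p} \<union> ?N" by auto
    then show ?thesis using fI by (metis (no_types, lifting) sum.union_disjoint finite_Un disjoint_iff mem_Collect_eq)
  qed
  also have "(\<Sum>i\<in>{i\<in>Ix. jv i p}. base i) = 12 * int ?s" by (simp add: base_def)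
  also have "(\<Sum>i\<in>?N. base i) = (\<Sum>i\<in>?N. \<Sum>e\<in>{e\<in>X p. i \<in> {l. e \<in> J l}}. bval p (mult e))"
  proof (rule sum.cong[OF refl])
    fix i assume "i \<in> ?N"
    then have "{e\<in>X p. i \<in> {l. e \<in> J l}} = {pick i p}" using pick_single[OF _ pV] by auto
    then show "base i = (\<Sum>e\<in>{e\<in>X p. i \<in> {l. e \<in> J l}}. bval p (mult e))" using \<open>i \<in> ?N\<close> by (simp add: base_def)
  qed
  also have "\<dots> = (\<Sum>e\<in>X p. of_nat (card ({l. e \<in> J l} \<inter> ?N)) * bval p (mult e))"
    by (rule double_count) (use fI finX in auto)
  also have "\<dots> \<le> (\<Sum>e\<in>X p. ww (mult e))"
  proof (rule sum_mono)
    fix e assume eX: "e \<in> X p"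
    let ?c = "card ({l. e \<in> J l} \<inter> ?N)"
    have "{l\<in>Ix. e \<in> J l} = ({l. e \<in> J l} \<inter> ?N) \<union> {i\<in>Ix. jv i p}"
      using jvD[OF _ pV _ eX] by auto
    then have cs: "?c + ?s = mult e" unfolding mult_def using fI
      by (subst card_Un_disjoint[symmetric]) auto
    have m3: "mult e \<le> 3" by (rule mult_le)
    show "of_nat ?c * bval p (mult e) \<le> ww (mult e)"
    proof (cases "?s = 0")
      case True
      then have "allnonJ p" using anj_s by simp
      then show ?thesis using cs True m3 by (cases "mult e"; cases "mult e - 1"; cases "mult e - 2"; simp add: bval_def ww_def)
    next
      case False
      then have "\<not> allnonJ p" using anj_s by simp
      then show ?thesis using cs False m3 by (cases "mult e"; cases "mult e - 1"; cases "mult e - 2"; auto simp: bval_def ww_def)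
    qed
  qed
  finally show ?thesis by linarith
qed

end

context tj begin

lemma card_ends_V: "e \<in> E \<Longrightarrow> card (ends e \<inter> V) = 2"
  using endsV ends2 by (simp add: Int_absorb2)

lemma sum_X_ww: "(\<Sum>p\<in>V. \<Sum>e\<in>X p. ww (mult e)) = (\<Sum>e\<in>E. 2 * ww (mult e))"
proof -
  have "(\<Sum>p\<in>V. \<Sum>e\<in>X p. ww (mult e)) = (\<Sum>p\<in>V. \<Sum>e\<in>{e\<in>E. p \<in> ends e}. ww (mult e))"
    by (simp add: X_def)
  also have "\<dots> = (\<Sum>e\<in>E. of_nat (card (ends e \<inter> V)) * ww (mult e))"
    by (rule double_count[OF finV finE])
  also have "\<dots> = (\<Sum>e\<in>E. 2 * ww (mult e))" by (rule sum.cong) (auto simp: card_ends_V)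
  finally show ?thesis .
qed

lemma fIx: "finite Ix" by (simp add: Ix_def)

lemma sum_jv: "(\<Sum>p\<in>V. card {i\<in>Ix. jv i p}) = (\<Sum>i\<in>Ix. n_join V ends (J i))"
proof -
  have "(\<Sum>i\<in>Ix. card {p\<in>V. i \<in> {i. jv i p}}) = (\<Sum>p\<in>V. card ({i. jv i p} \<inter> Ix))"
    by (rule double_count_nat[OF fIx finV])
  moreover have "{i. jv i p} \<inter> Ix = {i\<in>Ix. jv i p}" for p by auto
  ultimately show ?thesis by (simp add: n_join_def jv_def)
qed

lemma identity: "(\<Sum>e\<in>E. mult e) = card E + (\<Sum>i\<in>Ix. n_join V ends (J i))"
proof -
  have a: "(\<Sum>p\<in>V. card (X p)) = 2 * card E"
  proof -
    have "(\<Sum>p\<in>V. card (X p)) = (\<Sum>p\<in>V. card {e\<in>E. p \<in> ends e})" by (simp add: X_def)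
    also have "\<dots> = (\<Sum>e\<in>E. card (ends e \<inter> V))" by (rule double_count_nat[OF finV finE])
    also have "\<dots> = (\<Sum>e\<in>E. 2)" by (rule sum.cong) (auto simp: card_ends_V)
    finally show ?thesis by simp
  qed
  have a2: "(\<Sum>p\<in>V. card (X p)) = 3 * card V" using cardX by simp
  have b: "(\<Sum>p\<in>V. deg (J i) ends p) = 2 * card (J i)" if i: "i \<in> Ix" for i
  proof -
    have fJ: "finite (J i)" using JE[OF i] finE finite_subset by blast
    have "(\<Sum>p\<in>V. deg (J i) ends p) = (\<Sum>e\<in>J i. card (ends e \<inter> V))"
      unfolding deg_def by (rule double_count_nat[OF finV fJ])
    also have "\<dots> = (\<Sum>e\<in>J i. 2)" by (rule sum.cong) (use JE[OF i] card_ends_V in auto)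
    finally show ?thesis by simp
  qed
  have c: "(\<Sum>p\<in>V. deg (J i) ends p) = card V + 2 * n_join V ends (J i)" if i: "i \<in> Ix" for i
  proof -
    have "(\<Sum>p\<in>V. deg (J i) ends p) = (\<Sum>p\<in>V. 1 + 2 * (if jv i p then 1 else 0))"
      by (rule sum.cong[OF refl]) (use degJ_cases[OF i] in \<open>auto simp: jv_def\<close>)
    also have "\<dots> = (\<Sum>p\<in>V. 1) + (\<Sum>p\<in>V. 2 * (if jv i p then 1 else 0))"
      by (rule sum.distrib)
    also have "\<dots> = card V + 2 * (\<Sum>p\<in>V. (if jv i p then 1 else 0))"
      by (simp only: card_eq_sum sum_distrib_left)
    also have "(\<Sum>p\<in>V. (if jv i p then 1 else 0)) = card {p\<in>V. jv i p}"
      using finV by (simp add: sum.inter_filter[symmetric])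
    finally show ?thesis by (simp add: n_join_def jv_def)
  qed
  have d: "(\<Sum>i\<in>Ix. card (J i)) = (\<Sum>e\<in>E. mult e)"
  proof -
    have "(\<Sum>i\<in>Ix. card {e\<in>E. i \<in> {l. e \<in> J l}}) = (\<Sum>e\<in>E. card ({l. e \<in> J l} \<inter> Ix))"
      by (rule double_count_nat[OF fIx finE])
    moreover have "{e\<in>E. i \<in> {l. e \<in> J l}} = J i" if "i \<in> Ix" for i using JE[OF that] by auto
    moreover have "{l. e \<in> J l} \<inter> Ix = {l\<in>Ix. e \<in> J l}" for e by auto
    ultimately show ?thesis by (simp add: mult_def)
  qed
  have "2 * (\<Sum>e\<in>E. mult e) = (\<Sum>i\<in>Ix. 2 * card (J i))" by (simp only: sum_distrib_left[symmetric] d)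
  also have "\<dots> = (\<Sum>i\<in>Ix. card V + 2 * n_join V ends (J i))"
    by (rule sum.cong[OF refl]) (simp add: b[symmetric] c)
  also have "\<dots> = 3 * card V + 2 * (\<Sum>i\<in>Ix. n_join V ends (J i))"
    by (simp add: sum.distrib sum_distrib_left Ix_def)
  finally show ?thesis using a a2 by simp
qed

lemma final:
  "12 * int (\<Sum>i\<in>Ix. odd_components V (E - J i) ends)
     \<le> 24 * int (card {e\<in>E. mult e = 0}) + 36 * int (\<Sum>i\<in>Ix. n_join V ends (J i))"
proof -
  let ?n = "\<Sum>i\<in>Ix. n_join V ends (J i)"
  have A: "12 * int (\<Sum>i\<in>Ix. odd_components V (E - J i) ends) \<le> (\<Sum>p\<in>V. \<Sum>i\<in>Ix. tau p i)"
  proof -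
    have "12 * int (\<Sum>i\<in>Ix. odd_components V (E - J i) ends) = (\<Sum>i\<in>Ix. 12 * int (odd_components V (E - J i) ends))"
      by (simp add: sum_distrib_left)
    also have "\<dots> \<le> (\<Sum>i\<in>Ix. \<Sum>p\<in>V. tau p i)" by (rule sum_mono) (rule odd_bound)
    also have "\<dots> = (\<Sum>p\<in>V. \<Sum>i\<in>Ix. tau p i)" by (rule sum.swap)
    finally show ?thesis .
  qed
  have B: "(\<Sum>p\<in>V. \<Sum>i\<in>Ix. tau p i) \<le> (\<Sum>e\<in>E. 2 * ww (mult e)) + 12 * int ?n"
  proof -
    have "(\<Sum>p\<in>V. \<Sum>i\<in>Ix. tau p i) \<le> (\<Sum>p\<in>V. (\<Sum>e\<in>X p. ww (mult e)) + 12 * int (card {i\<in>Ix. jv i p}))"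
      by (rule sum_mono) (rule budget)
    also have "\<dots> = (\<Sum>p\<in>V. \<Sum>e\<in>X p. ww (mult e)) + (\<Sum>p\<in>V. 12 * int (card {i\<in>Ix. jv i p}))"
      by (rule sum.distrib)
    also have "(\<Sum>p\<in>V. 12 * int (card {i\<in>Ix. jv i p})) = 12 * int (\<Sum>p\<in>V. card {i\<in>Ix. jv i p})"
      by (simp only: sum_distrib_left[symmetric] of_nat_sum)
    also have "\<dots> = 12 * int ?n" by (simp only: sum_jv)
    finally show ?thesis by (simp only: sum_X_ww)
  qed
  have C: "(\<Sum>e\<in>E. 2 * ww (mult e)) \<le> 24 * int (card {e\<in>E. mult e = 0}) + 24 * int (\<Sum>e\<in>E. mult e) - 24 * int (card E)"
  proof -
    have "(\<Sum>e\<in>E. 2 * ww (mult e)) \<le> (\<Sum>e\<in>E. 24 * (if mult e = 0 then 1 else 0) + 24 * int (mult e) - 24)"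
    proof (rule sum_mono)
      fix e
      have "mult e \<le> 3" by (rule mult_le)
      then show "2 * ww (mult e) \<le> 24 * (if mult e = 0 then 1 else 0) + 24 * int (mult e) - 24"
        by (cases "mult e"; cases "mult e - 1"; cases "mult e - 2"; auto simp: ww_def)
    qed
    also have "(\<Sum>e\<in>E. 24 * (if mult e = 0 then 1 else 0) + 24 * int (mult e) - 24)
        = 24 * int (card {e\<in>E. mult e = 0}) + 24 * int (\<Sum>e\<in>E. mult e) - 24 * int (card E)"
    proof -
      have "(\<Sum>e\<in>E. (if mult e = 0 then 1 else 0::int)) = int (card {e\<in>E. mult e = 0})"
        using finE by (simp add: sum.inter_filter[symmetric])
      then show ?thesis by (simp add: sum.distrib sum_subtractf sum_distrib_left[symmetric] of_nat_sum)
    qed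
    finally show ?thesis .
  qed
  have D: "int (\<Sum>e\<in>E. mult e) = int (card E) + int ?n" using identity by simp
  show ?thesis using A B C D by linarith
qed

end


theorem theorem2p3:
  fixes V :: "'v set" and E :: "'e set" and ends :: "'e \<Rightarrow> 'v set"
    and J1 J2 J3 :: "'e set" and k :: real
  assumes "cubic V E ends" and "bridgeless V E ends"
    and "is_join V E ends J1" and "is_join V E ends J2" and "is_join V E ends J3"
    and "k = real (card (E_zero E J1 J2 J3))
              + 3 / 2 * real (n_join V ends J1 + n_join V ends J2 + n_join V ends J3)"
  shows "real (odd_components V (E - J1) ends + odd_components V (E - J2) ends
               + odd_components V (E - J3) ends) \<le> 2 * k"
proof -
  define J where "J = (\<lambda>i::nat. if i = 0 then J1 else if i = 1 then J2 else J3)"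
  interpret tj V E ends J
  proof
    show "cubic V E ends" by (rule assms(1))
    fix i assume "i \<in> Ix"
    then have "i = 0 \<or> i = 1 \<or> i = 2" by (auto simp: Ix_def)
    then show "is_join V E ends (J i)" using assms(3-5) by (auto simp: J_def)
  qed
  have sIx: "(\<Sum>i\<in>Ix. f i) = f 0 + f 1 + f 2" for f :: "nat \<Rightarrow> nat" by (simp add: Ix_def)
  have E0: "{e\<in>E. mult e = 0} = E_zero E J1 J2 J3"
  proof -
    have "mult e = 0 \<longleftrightarrow> e \<notin> J1 \<and> e \<notin> J2 \<and> e \<notin> J3" for e
      using mult_split[of 0 1 2 e] by (simp add: Ix_def J_def)
    then show ?thesis by (auto simp: E_zero_def)
  qed
  have "12 * int (\<Sum>i\<in>Ix. odd_components V (E - J i) ends)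
     \<le> 24 * int (card {e\<in>E. mult e = 0}) + 36 * int (\<Sum>i\<in>Ix. n_join V ends (J i))" by (rule final)
  then have "12 * int (odd_components V (E - J1) ends + odd_components V (E - J2) ends + odd_components V (E - J3) ends)
     \<le> 24 * int (card (E_zero E J1 J2 J3)) + 36 * int (n_join V ends J1 + n_join V ends J2 + n_join V ends J3)"
    unfolding sIx E0 by (simp add: J_def)
  then have "12 * real (odd_components V (E - J1) ends + odd_components V (E - J2) ends + odd_components V (E - J3) ends)
     \<le> 24 * real (card (E_zero E J1 J2 J3)) + 36 * real (n_join V ends J1 + n_join V ends J2 + n_join V ends J3)"
    by (metis (mono_tags, opaque_lifting) of_int_le_iff of_int_of_nat_eq of_int_add of_int_mult of_int_numeral)
  then show ?thesis using assms(6) by (simp add: field_simps)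
qed


end
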